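(* Let $T\in\mathcal{M}_k(F)$ be a decision table and $\psi$ a complexity measure over $\mathcal{M}_k(F)$. Then $\psi^a(T)\le\psi^d(T)\le\psi^i(T)$.
   Context: Let $\mathbb{N}=\{0,1,2,\dots\}$; for an integer $k\ge 2$ let $E_k=\{0,1,\dots,k-1\}$; let $\mathcal{P}(\mathbb{N})$ be the set of nonempty finite subsets of $\mathbb{N}$. Let $F$ be a nonempty set (of attribute names). A decision table $T\in\mathcal{M}_k(F)$ is a rectangular table with $n\ge 1$ columns labeled with attributes $f_1,\dots,f_n\in F$ (any two columns labeled with the same attribute are equal), whose rows are pairwise different tuples from $E_k^n$ (the set of rows may be empty), each row being labeled with a set of decisions from $\mathcal{P}(\mathbb{N})$. Write $At(T)=\{f_1,\dots,f_n\}$ and $\Delta(T)$ for the set of rows. For a word $\alpha=(f_{i_1},\delta_1)\cdots(f_{i_m},\delta_m)$ with $f_{i_j}\in At(T)$, $\delta_j\in E_k$, the subtable $T\alpha$ consists of the rows of $T$ having value $\delta_j$ in column $f_{i_j}$ for all $j$ ($T\lambda=T$ for the empty word $\lambda$). A decision tree over $\mathcal{M}_k(F)$ is a finite directed tree with a root (unique node with no entering edge) and at least two nodes such that the root and the edges leaving the root are unlabeled, each worker node (neither root nor terminal) is labeled with an attribute from $F$, each edge leaving a worker node is labeled with a number from $E_k$, and each terminal node is labeled with a number from $\mathbb{N}$. For a complete path $\xi$ (root to terminal node) whose worker nodes are labeled $f_{j_1},\dots,f_{j_m}$ in order, with the edges leaving them labeled $\delta_1,\dots,\delta_m$, put $\pi(\xi)=(f_{j_1},\delta_1)\cdots(f_{j_m},\delta_m)$,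 $\varphi(\xi)=f_{j_1}\cdots f_{j_m}$ (both empty if $m=0$), and let $\tau(\xi)$ be the label of its terminal node. A nondeterministic decision tree for $T$ is a decision tree $\Gamma$ whose worker-node attributes lie in $At(T)$, such that $\bigcup_{\xi}\Delta(T\pi(\xi))=\Delta(T)$ (union over complete paths), and for every row $r\in\Delta(T)$ and every complete path $\xi$ with $r\in\Delta(T\pi(\xi))$, $\tau(\xi)$ belongs to the decision set of $r$. A decision tree is deterministic if exactly one edge leaves the root and the edges leaving each worker node have pairwise different labels; a deterministic decision tree for $T$ is a deterministic decision tree that is a nondeterministic decision tree for $T$. A complexity measure over $\mathcal{M}_k(F)$ is any map $\psi:F^*\to\mathbb{N}$, where $F^*$ is the set of finite words over $F$ including the empty word $\lambda$. For a tree, $\psi(\Gamma)=\max_\xi\psi(\varphi(\xi))$ over complete paths. For $T$ with columns labeled $f_1,\dots,f_n$: $\psi^i(T)=\psi(f_1\cdots f_n)$, $\psi^d(T)$ is the minimum complexity of a deterministic decision tree for $T$, $\psi^a(T)$ the minimum complexity of a nondeterministic decision tree for $T$. *)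

theory Defs
  imports Main "HOL-Library.Extended_Nat"
begin

datatype 'f dtable = DTable (attrs: "'f list") (rows: "nat list set") (dec: "nat list \<Rightarrow> nat set")

definition is_table :: "nat \<Rightarrow> 'f dtable \<Rightarrow> bool" where
  "is_table k T \<longleftrightarrow>
     k \<ge> 2 \<and> attrs T \<noteq> [] \<and>
     (\<forall>r\<in>rows T. length r = length (attrs T) \<and> (\<forall>i<length r. r ! i < k)) \<and>
     (\<forall>i<length (attrs T). \<forall>j<length (attrs T). attrs T ! i = attrs T ! j \<longrightarrow>
        (\<forall>r\<in>rows T. r ! i = r ! j)) \<and>
     (\<forall>r\<in>rows T. dec T r \<noteq> {} \<and> finite (dec T r))"

definition subrows :: "'f dtable \<Rightarrow> ('f \<times> nat) list \<Rightarrow> nat list set" where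
  "subrows T \<alpha> = {r \<in> rows T. \<forall>(f, \<delta>) \<in> set \<alpha>.
      \<exists>i<length (attrs T). attrs T ! i = f \<and> r ! i = \<delta>}"

text \<open>A decision tree is the (unlabelled) root together with the list of subtrees reached
  by the (unlabelled) edges leaving the root.\<close>
datatype 'f dtree = Leaf nat | Node 'f "(nat \<times> 'f dtree) list"

type_synonym 'f dec_tree = "'f dtree list"

inductive wf_sub :: "nat \<Rightarrow> 'f dtree \<Rightarrow> bool" for k where
  "wf_sub k (Leaf d)"
| "cs \<noteq> [] \<Longrightarrow> (\<And>\<delta> c. (\<delta>, c) \<in> set cs \<Longrightarrow> \<delta> < k \<and> wf_sub k c) \<Longrightarrow> wf_sub k (Node f cs)"

text \<open>Decision tree over M_k(F): at least two nodes (root has a child).\<close>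
definition wf_tree :: "nat \<Rightarrow> 'f dec_tree \<Rightarrow> bool" where
  "wf_tree k G \<longleftrightarrow> G \<noteq> [] \<and> (\<forall>t\<in>set G. wf_sub k t)"

inductive sub_path :: "'f dtree \<Rightarrow> ('f \<times> nat) list \<Rightarrow> nat \<Rightarrow> bool" where
  "sub_path (Leaf d) [] d"
| "(\<delta>, c) \<in> set cs \<Longrightarrow> sub_path c p d \<Longrightarrow> sub_path (Node f cs) ((f, \<delta>) # p) d"

text \<open>Complete paths xi of a tree, given as (pi(xi), tau(xi)).\<close>
definition cpath :: "'f dec_tree \<Rightarrow> ('f \<times> nat) list \<Rightarrow> nat \<Rightarrow> bool" where
  "cpath G p d \<longleftrightarrow> (\<exists>t\<in>set G. sub_path t p d)"

definition tree_attrs :: "'f dec_tree \<Rightarrow> 'f set" where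
  "tree_attrs G = (\<Union>t\<in>set G. set_dtree t)"

inductive det_sub :: "'f dtree \<Rightarrow> bool" where
  "det_sub (Leaf d)"
| "distinct (map fst cs) \<Longrightarrow> (\<And>\<delta> c. (\<delta>, c) \<in> set cs \<Longrightarrow> det_sub c) \<Longrightarrow> det_sub (Node f cs)"

definition deterministic :: "'f dec_tree \<Rightarrow> bool" where
  "deterministic G \<longleftrightarrow> length G = 1 \<and> (\<forall>t\<in>set G. det_sub t)"

definition nondet_tree_for :: "nat \<Rightarrow> 'f dtable \<Rightarrow> 'f dec_tree \<Rightarrow> bool" where
  "nondet_tree_for k T G \<longleftrightarrow>
     wf_tree k G \<and> tree_attrs G \<subseteq> set (attrs T) \<and>
     (\<Union>{subrows T p | p d. cpath G p d}) = rows T \<and>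
     (\<forall>r\<in>rows T. \<forall>p d. cpath G p d \<and> r \<in> subrows T p \<longrightarrow> d \<in> dec T r)"

definition det_tree_for :: "nat \<Rightarrow> 'f dtable \<Rightarrow> 'f dec_tree \<Rightarrow> bool" where
  "det_tree_for k T G \<longleftrightarrow> deterministic G \<and> nondet_tree_for k T G"

text \<open>A complexity measure is any psi :: 'f list \<Rightarrow> nat.\<close>
definition tree_cplx :: "('f list \<Rightarrow> nat) \<Rightarrow> 'f dec_tree \<Rightarrow> nat" where
  "tree_cplx \<psi> G = Max {\<psi> (map fst p) | p d. cpath G p d}"

definition psi_i :: "('f list \<Rightarrow> nat) \<Rightarrow> 'f dtable \<Rightarrow> nat" where
  "psi_i \<psi> T = \<psi> (attrs T)"

text \<open>Minima are taken in enat, so that a minimum over the empty set would be infinity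
  (no trivialization by the convention Inf {} = 0 on nat).\<close>
definition psi_d :: "nat \<Rightarrow> ('f list \<Rightarrow> nat) \<Rightarrow> 'f dtable \<Rightarrow> enat" where
  "psi_d k \<psi> T = (INF G \<in> {G. det_tree_for k T G}. enat (tree_cplx \<psi> G))"

definition psi_a :: "nat \<Rightarrow> ('f list \<Rightarrow> nat) \<Rightarrow> 'f dtable \<Rightarrow> enat" where
  "psi_a k \<psi> T = (INF G \<in> {G. nondet_tree_for k T G}. enat (tree_cplx \<psi> G))"

end

theory Submission
  imports Defs
begin

fun build :: "nat \<Rightarrow> (nat list \<Rightarrow> nat) \<Rightarrow> 'f list \<Rightarrow> nat list \<Rightarrow> 'f dtree" where
  "build k L [] acc = Leaf (L acc)"
| "build k L (f#fs) acc = Node f (map (\<lambda>\<delta>. (\<delta>, build k L fs (acc@[\<delta>]))) [0..<k])"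

lemma sub_path_Leaf: "sub_path (Leaf x) p d \<longleftrightarrow> p = [] \<and> d = x"
  by (auto elim: sub_path.cases intro: sub_path.intros)

lemma sub_path_Node: "sub_path (Node f cs) p d \<longleftrightarrow>
   (\<exists>\<delta> c p'. p = (f,\<delta>)#p' \<and> (\<delta>,c) \<in> set cs \<and> sub_path c p' d)"
  by (rule iffI, erule sub_path.cases, auto intro: sub_path.intros)

lemma build_path: "sub_path (build k L fs acc) p d \<longleftrightarrow>
   (\<exists>vs. length vs = length fs \<and> (\<forall>v\<in>set vs. v<k) \<and> p = zip fs vs \<and> d = L (acc@vs))"
proof (induction fs arbitrary: acc p d)
  case Nil
  then show ?case by (auto simp: sub_path_Leaf)
next
  case (Cons f fs)
  show ?case
  proof
    assume "sub_path (build k L (f # fs) acc) p d"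
    then obtain \<delta> p' where "p = (f,\<delta>)#p'" "\<delta> < k" "sub_path (build k L fs (acc@[\<delta>])) p' d"
      by (auto simp: sub_path_Node)
    with Cons.IH obtain vs where "length vs = length fs" "\<forall>v\<in>set vs. v<k" "p' = zip fs vs"
       "d = L ((acc@[\<delta>])@vs)" by blast
    then show "\<exists>vs. length vs = length (f#fs) \<and> (\<forall>v\<in>set vs. v<k) \<and> p = zip (f#fs) vs \<and> d = L (acc@vs)"
      using \<open>p = _\<close> \<open>\<delta> < k\<close> by (intro exI[of _ "\<delta>#vs"]) auto
  next
    assume "\<exists>vs. length vs = length (f#fs) \<and> (\<forall>v\<in>set vs. v<k) \<and> p = zip (f#fs) vs \<and> d = L (acc@vs)"
    then obtain \<delta> vs where "length vs = length fs" "\<forall>v\<in>set vs. v<k" "\<delta> < k"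
      "p = (f,\<delta>) # zip fs vs" "d = L ((acc@[\<delta>])@vs)"
      by (auto simp: length_Suc_conv)
    then have "sub_path (build k L fs (acc@[\<delta>])) (zip fs vs) d" using Cons.IH by blast
    then show "sub_path (build k L (f # fs) acc) p d"
      using \<open>p = _\<close> \<open>\<delta> < k\<close> by (auto simp: sub_path_Node image_iff)
  qed
qed

lemma build_wf: "k > 0 \<Longrightarrow> wf_sub k (build k L fs acc)"
  by (induction fs arbitrary: acc) (auto intro!: wf_sub.intros)

lemma build_det: "det_sub (build k L fs acc)"
  by (induction fs arbitrary: acc) (auto intro!: det_sub.intros simp: comp_def)

lemma build_attrs: "set_dtree (build k L fs acc) \<subseteq> set fs"
  by (induction fs arbitrary: acc) auto

theorem lemma1:
  fixes k :: nat and T :: "'f dtable" and \<psi> :: "'f list \<Rightarrow> nat"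
  assumes "is_table k T"
  shows "psi_a k \<psi> T \<le> psi_d k \<psi> T \<and> psi_d k \<psi> T \<le> enat (psi_i \<psi> T)"
proof
  show "psi_a k \<psi> T \<le> psi_d k \<psi> T"
    unfolding psi_a_def psi_d_def det_tree_for_def
    by (rule INF_superset_mono) auto
next
  define L where "L = (\<lambda>acc. if acc \<in> rows T then (SOME d. d \<in> dec T acc) else 0)"
  define G where "G = [build k L (attrs T) []]"
  let ?n = "length (attrs T)"
  have k2: "k \<ge> 2" and rowsT: "\<forall>r\<in>rows T. length r = length (attrs T) \<and> (\<forall>i<length r. r ! i < k)"
    and decT: "\<forall>r\<in>rows T. dec T r \<noteq> {} \<and> finite (dec T r)"
    using assms unfolding is_table_def by blast+
  have cp: "cpath G p d \<longleftrightarrow> (\<exists>vs. length vs = ?n \<and> (\<forall>v\<in>set vs. v<k) \<and> p = zip (attrs T) vs \<and> d = L vs)" for p d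
    unfolding G_def cpath_def by (simp add: build_path)
  have col: "\<forall>i<?n. \<forall>j<?n. attrs T ! i = attrs T ! j \<longrightarrow> (\<forall>r\<in>rows T. r ! i = r ! j)"
    using assms unfolding is_table_def by blast
  have key: "r = vs" if sr: "r \<in> subrows T (zip (attrs T) vs)" and lv: "length vs = ?n" for r vs
  proof -
    have r: "r \<in> rows T" and all: "\<forall>x\<in>set (zip (attrs T) vs). \<exists>i<?n. attrs T ! i = fst x \<and> r ! i = snd x"
      using sr unfolding subrows_def by (auto simp: case_prod_beta)
    have lr: "length r = ?n" using rowsT decT r by blast
    show ?thesis
    proof (rule nth_equalityI)
      show "length r = length vs" using lr lv by simp
      fix j assume "j < length r"
      then have j: "j < ?n" using lr by simp
      have "(attrs T ! j, vs ! j) \<in> set (zip (attrs T) vs)"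
        using j lv in_set_zip[of "(attrs T ! j, vs ! j)" "attrs T" vs] by auto
      then obtain i where i: "i < ?n" "attrs T ! i = attrs T ! j" "r ! i = vs ! j"
        using all by fastforce
      have "r ! i = r ! j" using col i j r by blast
      then show "r ! j = vs ! j" using i by simp
    qed
  qed
  have det: "det_tree_for k T G"
    unfolding det_tree_for_def deterministic_def nondet_tree_for_def
  proof (intro conjI)
    show "length G = 1" by (simp add: G_def)
    show "\<forall>t\<in>set G. det_sub t" by (simp add: G_def build_det)
    show "wf_tree k G" using k2 by (simp add: G_def wf_tree_def build_wf)
    show "tree_attrs G \<subseteq> set (attrs T)" using build_attrs by (simp add: G_def tree_attrs_def) 
    show "\<Union> {subrows T p |p d. cpath G p d} = rows T"
    proof
      show "\<Union> {subrows T p |p d. cpath G p d} \<subseteq> rows T" by (auto simp: subrows_def)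
      show "rows T \<subseteq> \<Union> {subrows T p |p d. cpath G p d}"
      proof
        fix r assume r: "r \<in> rows T"
        have lr: "length r = ?n" and rk: "\<forall>i<length r. r ! i < k"
          using rowsT r by blast+
        have "cpath G (zip (attrs T) r) (L r)" unfolding cp using lr rk by (intro exI[of _ r]) (auto simp: in_set_conv_nth)
        moreover have "r \<in> subrows T (zip (attrs T) r)"
          using r lr unfolding subrows_def by (auto simp: in_set_zip)
        ultimately show "r \<in> \<Union> {subrows T p |p d. cpath G p d}" by blast
      qed
    qed
    show "\<forall>r\<in>rows T. \<forall>p d. cpath G p d \<and> r \<in> subrows T p \<longrightarrow> d \<in> dec T r"
    proof (intro ballI allI impI)
      fix r p d assume r: "r \<in> rows T" and h: "cpath G p d \<and> r \<in> subrows T p"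
      then obtain vs where vs: "length vs = ?n" "p = zip (attrs T) vs" "d = L vs" by (auto simp: cp)
      then have "r = vs" using key h by blast
      have "dec T r \<noteq> {}" using rowsT decT r by blast
      then show "d \<in> dec T r" using vs r \<open>r = vs\<close> by (simp add: L_def some_in_eq)
    qed
  qed
  have "{\<psi> (map fst p) | p d. cpath G p d} = {\<psi> (attrs T)}"
  proof -
    have "cpath G (zip (attrs T) (replicate ?n 0)) (L (replicate ?n 0))"
      unfolding cp using k2 by (intro exI[of _ "replicate ?n 0"]) auto
    moreover have "map fst p = attrs T" if "cpath G p d" for p d
      using that by (auto simp: cp)
    ultimately show ?thesis
    proof (intro equalityI subsetI)
      fix x assume "x \<in> {\<psi> (map fst p) | p d. cpath G p d}"
      then obtain p d where "x = \<psi> (map fst p)" "cpath G p d" by blast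
      then show "x \<in> {\<psi> (attrs T)}" using \<open>\<And>p d. cpath G p d \<Longrightarrow> map fst p = attrs T\<close> by simp
    next
      fix x assume "x \<in> {\<psi> (attrs T)}"
      then have "x = \<psi> (map fst (zip (attrs T) (replicate ?n 0)))" by simp
      then show "x \<in> {\<psi> (map fst p) | p d. cpath G p d}"
        using \<open>cpath G (zip (attrs T) (replicate ?n 0)) (L (replicate ?n 0))\<close> by blast
    qed
  qed
  then have "tree_cplx \<psi> G = psi_i \<psi> T" by (simp add: tree_cplx_def psi_i_def)
  then show "psi_d k \<psi> T \<le> enat (psi_i \<psi> T)"
    unfolding psi_d_def using det INF_lower[of G "{G. det_tree_for k T G}" "\<lambda>G. enat (tree_cplx \<psi> G)"]
    by simp
qed

end
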